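(* Consider Algorithm NCB run with inputs $k\ge2$ and $T$ on an instance with $\mu^*\ge\frac{32\sqrt{k\log k\log T}}{\sqrt T}$. On the event $G$, every arm $i$ that is pulled at least once in Phase II satisfies $$\mu_i\ge\mu^*-8\sqrt{\frac{\mu^*\log T}{T_i-1}},$$ where $T_i$ is the total number of times arm $i$ is pulled during the whole run.
   Context: Bandit setup: $k$ arms, arm $i$ a distribution on $[0,1]$ with mean $\mu_i$, $\mu^*:=\max_i\mu_i$. $\log$ is the natural logarithm. Canonical model: a $k\times T$ table $(Y_{i,s})$ of independent entries with $Y_{i,s}$ distributed as arm $i$; the $s$-th pull of arm $i$ yields $Y_{i,s}$. Let $\widehat\mu_{i,s}:=\frac1s\sum_{r=1}^sY_{i,r}$. Algorithm NCB (inputs $k,T$): $\widetilde T:=16\sqrt{\frac{kT\log T}{\log k}}$. Phase I: in each round $t\le\widetilde T$ pull a uniformly random arm. Phase II: in each round $\widetilde T<t\le T$ pull an arm maximizing $\mathrm{NCB}_i:=\widehat\mu_i+4\sqrt{\widehat\mu_i\log T/n_i}$, where $n_i$ is the number of pulls of $i$ before the round and $\widehat\mu_i$ its empirical mean (ties arbitrary). Events: $G_1$: every arm is pulled at least $\frac{\widetilde T}{2k}$ times in Phase I. $G_2$: for every arm $i$ with $\mu_i>\frac{6\sqrt{k\log k\log T}}{\sqrt T}$ and every integer $s$ with $\frac{\widetilde T}{2k}\le s\le T$, $|\mu_i-\widehat\mu_{i,s}|\le 3\sqrt{\frac{\mu_i\log T}{s}}$. $G_3$: for every arm $j$ with $\mu_j\le\frac{6\sqrt{k\log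 k\log T}}{\sqrt T}$ and every integer $s$ with $\frac{\widetilde T}{2k}\le s\le T$, $\widehat\mu_{j,s}\le \frac{9\sqrt{k\log k\log T}}{\sqrt T}$. $G:=G_1\cap G_2\cap G_3$. *)

theory Defs
  imports Complex_Main
begin

text \<open>Arms are 0,...,k-1; rounds are 1,...,T. A run of NCB is described by the
sequence a of pulled arms (a t = arm pulled in round t) together with the
canonical reward table Y (Y i s = reward of the s-th pull of arm i).\<close>

definition Ttilde :: "nat \<Rightarrow> nat \<Rightarrow> real" where
  "Ttilde k T = 16 * sqrt (real k * real T * ln (real T) / ln (real k))"

definition npulls :: "(nat \<Rightarrow> nat) \<Rightarrow> nat \<Rightarrow> nat \<Rightarrow> nat" where
  "npulls a i t = card {s \<in> {1..<t}. a s = i}"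

definition emp_mean :: "(nat \<Rightarrow> nat \<Rightarrow> real) \<Rightarrow> nat \<Rightarrow> nat \<Rightarrow> real" where
  "emp_mean Y i s = (\<Sum>r = 1..s. Y i r) / real s"

definition ncb_index :: "nat \<Rightarrow> (nat \<Rightarrow> nat \<Rightarrow> real) \<Rightarrow> (nat \<Rightarrow> nat) \<Rightarrow> nat \<Rightarrow> nat \<Rightarrow> real" where
  "ncb_index T Y a i t =
     (let n = npulls a i t; m = emp_mean Y i n in m + 4 * sqrt (m * ln (real T) / real n))"

text \<open>a is a possible trajectory of NCB: in Phase I (t \<le> Ttilde) any arm may be
drawn (uniform random choice), in Phase II an arm maximizing the NCB index is
pulled (ties arbitrary).\<close>
definition ncb_run :: "nat \<Rightarrow> nat \<Rightarrow> (nat \<Rightarrow> nat \<Rightarrow> real) \<Rightarrow> (nat \<Rightarrow> nat) \<Rightarrow> bool" where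
  "ncb_run k T Y a \<longleftrightarrow>
     (\<forall>t \<in> {1..T}. a t < k \<and>
        (real t > Ttilde k T \<longrightarrow> (\<forall>j < k. ncb_index T Y a j t \<le> ncb_index T Y a (a t) t)))"

definition event_G1 :: "nat \<Rightarrow> nat \<Rightarrow> (nat \<Rightarrow> nat) \<Rightarrow> bool" where
  "event_G1 k T a \<longleftrightarrow>
     (\<forall>i < k. real (card {t \<in> {1..T}. real t \<le> Ttilde k T \<and> a t = i}) \<ge> Ttilde k T / (2 * real k))"

definition event_G2 :: "nat \<Rightarrow> nat \<Rightarrow> (nat \<Rightarrow> real) \<Rightarrow> (nat \<Rightarrow> nat \<Rightarrow> real) \<Rightarrow> bool" where
  "event_G2 k T \<mu> Y \<longleftrightarrow>
     (\<forall>i < k. \<mu> i > 6 * sqrt (real k * ln (real k) * ln (real T)) / sqrt (real T) \<longrightarrow>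
        (\<forall>s::nat. Ttilde k T / (2 * real k) \<le> real s \<and> s \<le> T \<longrightarrow>
           \<bar>\<mu> i - emp_mean Y i s\<bar> \<le> 3 * sqrt (\<mu> i * ln (real T) / real s)))"

definition event_G3 :: "nat \<Rightarrow> nat \<Rightarrow> (nat \<Rightarrow> real) \<Rightarrow> (nat \<Rightarrow> nat \<Rightarrow> real) \<Rightarrow> bool" where
  "event_G3 k T \<mu> Y \<longleftrightarrow>
     (\<forall>j < k. \<mu> j \<le> 6 * sqrt (real k * ln (real k) * ln (real T)) / sqrt (real T) \<longrightarrow>
        (\<forall>s::nat. Ttilde k T / (2 * real k) \<le> real s \<and> s \<le> T \<longrightarrow>
           emp_mean Y j s \<le> 9 * sqrt (real k * ln (real k) * ln (real T)) / sqrt (real T)))"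

end

theory Submission
  imports Defs
begin

lemma best_arm:
  fixes y2 mh e2 :: real
  assumes "0 < y2" "y2 - 3*sqrt(y2*e2) \<le> mh" "0 \<le> e2" "256*e2 \<le> y2" "0 \<le> mh"
  shows "y2 \<le> mh + 4*sqrt(mh*e2)"
proof -
  define y where "y = sqrt y2"
  define e where "e = sqrt e2"
  define x where "x = sqrt mh"
  have y0: "y \<ge> 0" and e0: "e \<ge> 0" and x0: "x \<ge> 0" using assms by (auto simp: y_def e_def x_def)
  have yy: "y2 = y^2" and ee: "e2 = e^2" and xx: "mh = x^2" using assms by (auto simp: y_def e_def x_def)
  have s1: "sqrt(y2*e2) = y*e" by (simp add: y_def e_def real_sqrt_mult)
  have s2: "sqrt(mh*e2) = x*e" by (simp add: x_def e_def real_sqrt_mult)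
  have "16*e \<le> y"
  proof -
    have "sqrt (256*e2) \<le> sqrt y2" using assms(4) by simp
    moreover have "sqrt (256*e2) = 16 * e" by (simp add: e_def real_sqrt_mult)
    ultimately show ?thesis by (simp add: y_def)
  qed
  hence "y*e \<le> y*(y/16)" using y0 by (intro mult_left_mono) auto
  hence h1: "x^2 \<ge> y^2 - 3*(y*(y/16))" using assms(2) s1 yy xx by linarith
  have q1: "(3*y/4)^2 = 9/16*(y*y)" by (simp add: power2_eq_square)
  have q2: "y^2 - 3*(y*(y/16)) = 13/16*(y*y)" by (simp add: power2_eq_square algebra_simps)
  have "0 \<le> y*y" using y0 by simp
  hence "(3*y/4)^2 \<le> x^2" using h1 q1 q2 by linarith
  hence x34: "3*y/4 \<le> x" using x0 y0 power2_le_imp_le by blast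
  have "(3*y)*e \<le> (4*x)*e" using x34 e0 by (intro mult_right_mono) auto
  hence "3*(y*e) \<le> 4*(x*e)" by (simp add: algebra_simps)
  thus ?thesis using assms(2) s1 s2 yy xx by linarith
qed

lemma arm_G2:
  fixes y2 mh e2 mi :: real
  assumes "0 \<le> mi" "mi \<le> y2" "mh \<le> mi + 3*sqrt(mi*e2)" "y2 \<le> mh + 4*sqrt(mh*e2)"
    "256*e2 \<le> y2" "0 \<le> e2" "0 \<le> mh"
  shows "y2 - 8*sqrt(y2*e2) \<le> mi"
proof -
  define y where "y = sqrt y2"
  define e where "e = sqrt e2"
  define x where "x = sqrt mh"
  define z where "z = sqrt mi"
  have y0: "y \<ge> 0" and e0: "e \<ge> 0" and x0: "x \<ge> 0" and z0: "z \<ge> 0" using assms by (auto simp: y_def e_def x_def z_def)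
  have yy: "y2 = y^2" and ee: "e2 = e^2" and xx: "mh = x^2" and zz: "mi = z^2" using assms by (auto simp: y_def e_def x_def z_def)
  have s1: "sqrt(y2*e2) = y*e" by (simp add: y_def e_def real_sqrt_mult)
  have s2: "sqrt(mh*e2) = x*e" by (simp add: x_def e_def real_sqrt_mult)
  have s3: "sqrt(mi*e2) = z*e" by (simp add: z_def e_def real_sqrt_mult)
  have "16*e \<le> y"
  proof -
    have "sqrt (256*e2) \<le> sqrt y2" using assms(5) by simp
    moreover have "sqrt (256*e2) = 16 * e" by (simp add: e_def real_sqrt_mult)
    ultimately show ?thesis by (simp add: y_def)
  qed
  have zy: "z \<le> y" using assms(2) by (simp add: z_def y_def)
  have sq: "(z+3/2*e)^2 = z^2 + 3*(z*e) + 9/4*(e*e)" by (simp add: power2_eq_square algebra_simps)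
  have "0 \<le> e*e" by simp
  hence "x^2 \<le> (z + 3/2*e)^2" using assms(3) s3 xx zz sq by linarith
  hence xz: "x \<le> z + 3/2*e" using x0 z0 e0 power2_le_imp_le by (metis add_nonneg_nonneg mult_nonneg_nonneg zero_le_divide_iff zero_le_numeral)
  have "x*e \<le> (z+3/2*e)*e" using xz e0 by (rule mult_right_mono)
  hence A: "y^2 \<le> z^2 + 7*(z*e) + 6*(e*e)" using assms(3,4) s2 s3 xx zz yy by (simp add: algebra_simps)
  have "z*e \<le> y*e" using zy e0 by (rule mult_right_mono)
  moreover have "(16*e)*e \<le> y*e" using \<open>16*e \<le> y\<close> e0 by (intro mult_right_mono) auto
  moreover have "(16*e)*e = 16*(e*e)" by simp
  moreover have "0 \<le> y*e" using y0 e0 by simp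
  ultimately have "y^2 \<le> z^2 + 8*(y*e)" using A by linarith
  thus ?thesis using s1 yy zz by linarith
qed

lemma arm_G3:
  fixes y2 mh e2 c :: real
  assumes "mh \<le> 9*c" "e2 \<le> c/8" "32*c \<le> y2" "0 < c" "0 \<le> mh" "0 \<le> e2"
    "y2 \<le> mh + 4*sqrt(mh*e2)"
  shows False
proof -
  have "mh*e2 \<le> (9*c)*(c/8)" using assms by (intro mult_mono) auto
  also have "\<dots> \<le> (2*c)^2" using assms by (simp add: power2_eq_square)
  finally have "sqrt(mh*e2) \<le> sqrt ((2*c)^2)" by (rule real_sqrt_le_mono)
  also have "sqrt ((2*c)^2) = 2*c" using assms(4) by (subst real_sqrt_abs) simp
  finally have "sqrt(mh*e2) \<le> 2*c" .
  thus False using assms by linarith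
qed


theorem lemma4:
  fixes k T :: nat and \<mu> :: "nat \<Rightarrow> real" and Y :: "nat \<Rightarrow> nat \<Rightarrow> real" and a :: "nat \<Rightarrow> nat"
  assumes k2: "k \<ge> 2"
    and mu_range: "\<forall>i < k. 0 \<le> \<mu> i \<and> \<mu> i \<le> 1"
    and Y_range: "\<forall>i < k. \<forall>s \<in> {1..T}. 0 \<le> Y i s \<and> Y i s \<le> 1"
    and run: "ncb_run k T Y a"
    and big: "Max (\<mu> ` {..<k}) \<ge> 32 * sqrt (real k * ln (real k) * ln (real T)) / sqrt (real T)"
    and G1: "event_G1 k T a" and G2: "event_G2 k T \<mu> Y" and G3: "event_G3 k T \<mu> Y"
    and i: "i < k"
    and phase2: "\<exists>t \<in> {1..T}. real t > Ttilde k T \<and> a t = i"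
  shows "\<mu> i \<ge> Max (\<mu> ` {..<k})
           - 8 * sqrt (Max (\<mu> ` {..<k}) * ln (real T) / (real (npulls a i (T + 1)) - 1))"
proof -
  define L where "L = ln (real T)"
  define Tt where "Tt = Ttilde k T"
  define M where "M = Max (\<mu> ` {..<k})"
  have finK: "finite (\<mu> ` {..<k})" by simp
  have "\<mu> 0 \<in> \<mu> ` {..<k}" using k2 by simp
  hence neK: "\<mu> ` {..<k} \<noteq> {}" by blast
  obtain js where js: "js < k" "\<mu> js = M"
    using Max_in[OF finK neK] unfolding M_def by auto
  have Mi: "\<mu> i \<le> M" unfolding M_def using finK i by (intro Max_ge) auto
  obtain t0 where t0: "t0 \<in> {1..T}" "Tt < real t0" "a t0 = i" using phase2 Tt_def by auto
  have T1: "T \<ge> 1" using t0 by auto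
  show ?thesis
  proof (cases "T = 1")
    case True
    have allle: "\<mu> j \<le> 0" if j: "j < k" for j
    proof (rule ccontr)
      assume "\<not> \<mu> j \<le> 0"
      hence pos: "\<mu> j > 6 * sqrt (real k * ln (real k) * ln (real T)) / sqrt (real T)"
        using True by simp
      have "Ttilde k T / (2 * real k) \<le> real (0::nat) \<and> (0::nat) \<le> T"
        using True by (simp add: Ttilde_def)
      hence "\<bar>\<mu> j - emp_mean Y j 0\<bar> \<le> 3 * sqrt (\<mu> j * ln (real T) / real (0::nat))"
        using G2 j pos unfolding event_G2_def by blast
      hence "\<mu> j = 0" by (simp add: emp_mean_def)
      thus False using \<open>\<not> \<mu> j \<le> 0\<close> by simp
    qed
    have "M \<le> 0" using allle js by metis
    moreover have "0 \<le> \<mu> i" using mu_range i by simp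
    ultimately show ?thesis using True by (simp add: M_def[symmetric])
  next
    case False
    hence T2: "T \<ge> 2" using T1 by simp
    have Lpos: "L > 0" unfolding L_def using T2 by simp
    have lnk: "ln (real k) > 0" using k2 by simp
    define c where "c = sqrt (real k * ln (real k) * L) / sqrt (real T)"
    have cpos: "c > 0" unfolding c_def using Lpos lnk k2 T2 by simp
    have thr6: "6 * sqrt (real k * ln (real k) * ln (real T)) / sqrt (real T) = 6 * c"
      by (simp add: c_def L_def)
    have thr9: "9 * sqrt (real k * ln (real k) * ln (real T)) / sqrt (real T) = 9 * c"
      by (simp add: c_def L_def)
    have bigc: "32 * c \<le> M" using big by (simp add: c_def L_def M_def)
    have Ttpos: "Tt > 0" unfolding Tt_def Ttilde_def L_def[symmetric] using Lpos lnk k2 T2 by simp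
    have p: "real k * real T * L / ln (real k) * (real k * ln (real k) * L) = (real k * L)^2 * real T"
      using lnk by (simp add: field_simps power2_eq_square)
    have sq: "sqrt (real k * real T * L / ln (real k)) * sqrt (real k * ln (real k) * L) = real k * L * sqrt (real T)"
      by (simp only: real_sqrt_mult[symmetric] p) (use Lpos in \<open>simp add: real_sqrt_mult\<close>)
    have key: "Tt / (2 * real k) * c = 8 * L"
    proof -
      have "Tt / (2 * real k) * c = 8 / real k * (sqrt (real k * real T * L / ln (real k)) * sqrt (real k * ln (real k) * L)) / sqrt (real T)"
        unfolding Tt_def Ttilde_def c_def L_def[symmetric] by (simp add: field_simps)
      also have "\<dots> = 8 * L" using sq k2 T2 by simp
      finally show ?thesis .
    qed
    have lower: "L / real s \<le> c / 8" "0 < real s" if "Tt / (2 * real k) \<le> real s" for s :: nat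
    proof -
      have q: "Tt / (2 * real k) > 0" using Ttpos k2 by simp
      thus "0 < real s" using that by linarith
      have sp: "0 < real s" using q that by linarith
      have "L / real s \<le> L / (Tt / (2 * real k))"
        by (rule divide_left_mono[OF that]) (use Lpos q sp mult_pos_pos[OF sp q] in auto)
      also have "\<dots> = (Tt / (2 * real k) * c / 8) / (Tt / (2 * real k))" using key by simp
      also have "\<dots> = c / 8" using q Ttpos k2 by simp
      finally show "L / real s \<le> c / 8" .
    qed
    define S where "S = {s \<in> {1..T}. a s = i}"
    have finS: "finite S" unfolding S_def by simp
    have t0S: "t0 \<in> S" using t0 unfolding S_def by simp
    define t where "t = Max S"
    have tS: "t \<in> S" unfolding t_def using finS t0S Max_in by blast
    have t0t: "t0 \<le> t" unfolding t_def using finS t0S by simp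
    have tT: "t \<in> {1..T}" "a t = i" using tS unfolding S_def by auto
    have tTt: "Tt < real t" using t0 t0t by linarith
    define n where "n = npulls a i t"
    have nT: "npulls a i (T + 1) = n + 1"
    proof -
      have "{s \<in> {1..<T+1}. a s = i} = insert t {s \<in> {1..<t}. a s = i}"
      proof (intro equalityI subsetI)
        fix s assume "s \<in> {s \<in> {1..<T+1}. a s = i}"
        hence "s \<in> S" unfolding S_def by auto
        hence "s \<le> t" unfolding t_def using finS by simp
        thus "s \<in> insert t {s \<in> {1..<t}. a s = i}" using \<open>s \<in> S\<close> unfolding S_def by auto
      next
        fix s assume "s \<in> insert t {s \<in> {1..<t}. a s = i}"
        thus "s \<in> {s \<in> {1..<T+1}. a s = i}" using tT by auto
      qed
      thus ?thesis unfolding n_def npulls_def by simp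
    qed
    have pulls_lb: "Tt / (2 * real k) \<le> real (npulls a j t)" if j: "j < k" for j
    proof -
      have "{s \<in> {1..T}. real s \<le> Tt \<and> a s = j} \<subseteq> {s \<in> {1..<t}. a s = j}"
        using tTt by auto
      hence "card {s \<in> {1..T}. real s \<le> Tt \<and> a s = j} \<le> npulls a j t"
        unfolding npulls_def by (intro card_mono) auto
      moreover have "Tt / (2 * real k) \<le> real (card {s \<in> {1..T}. real s \<le> Tt \<and> a s = j})"
        using G1 j unfolding event_G1_def Tt_def by blast
      ultimately show ?thesis by linarith
    qed
    have pulls_ub: "npulls a j t \<le> T" for j
    proof -
      have "npulls a j t \<le> card {1..<t}" unfolding npulls_def by (intro card_mono) auto
      thus ?thesis using tT by auto
    qed
    have emp_nn: "0 \<le> emp_mean Y j s" if "j < k" "s \<le> T" for j s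
      unfolding emp_mean_def using Y_range that by (intro divide_nonneg_nonneg sum_nonneg) auto
    have ncb: "ncb_index T Y a j t = emp_mean Y j (npulls a j t) + 4 * sqrt (emp_mean Y j (npulls a j t) * (L / real (npulls a j t)))" for j
      by (simp add: ncb_index_def Let_def L_def)
    have cmp: "ncb_index T Y a js t \<le> ncb_index T Y a i t"
      using run tT tTt js unfolding ncb_run_def Tt_def by auto
    define ns where "ns = npulls a js t"
    define ms where "ms = emp_mean Y js ns"
    define mi where "mi = emp_mean Y i n"
    have msnn: "0 \<le> ms" unfolding ms_def ns_def using js pulls_ub emp_nn by simp
    have minn: "0 \<le> mi" unfolding mi_def n_def using i pulls_ub emp_nn by simp
    have es: "L / real ns \<le> c / 8" "0 < real ns" using lower pulls_lb js unfolding ns_def by auto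
    have ei: "L / real n \<le> c / 8" "0 < real n" using lower pulls_lb i unfolding n_def by auto
    have esnn: "0 \<le> L / real ns" using es Lpos by simp
    have einn: "0 \<le> L / real n" using ei Lpos by simp
    have Mpos: "0 < M" using bigc cpos by linarith
    have js6: "6 * c < \<mu> js" using js bigc cpos by linarith
    have "\<bar>\<mu> js - emp_mean Y js ns\<bar> \<le> 3 * sqrt (\<mu> js * ln (real T) / real ns)"
      using G2 js(1) js6 pulls_lb[OF js(1)] pulls_ub unfolding event_G2_def thr6 ns_def Tt_def[symmetric] by blast
    hence g2s: "M - 3 * sqrt (M * (L / real ns)) \<le> ms"
      using js by (simp add: ms_def L_def)
    have "M \<le> ms + 4 * sqrt (ms * (L / real ns))"
      using best_arm[OF Mpos g2s esnn _ msnn] es bigc by linarith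
    also have "\<dots> \<le> mi + 4 * sqrt (mi * (L / real n))"
      using cmp ncb[of js] ncb[of i] unfolding ms_def mi_def ns_def n_def by simp
    finally have Mle: "M \<le> mi + 4 * sqrt (mi * (L / real n))" .
    show ?thesis
    proof (cases "\<mu> i > 6 * c")
      case True
      have "\<bar>\<mu> i - emp_mean Y i n\<bar> \<le> 3 * sqrt (\<mu> i * ln (real T) / real n)"
        using G2 i True pulls_lb[OF i] pulls_ub unfolding event_G2_def thr6 n_def Tt_def[symmetric] by blast
      hence g2i: "mi \<le> \<mu> i + 3 * sqrt (\<mu> i * (L / real n))"
        by (simp add: mi_def L_def)
      have "M - 8 * sqrt (M * (L / real n)) \<le> \<mu> i"
        using arm_G2[OF _ Mi g2i Mle _ einn minn] mu_range i ei bigc by simp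
      thus ?thesis using nT by (simp add: M_def L_def)
    next
      case False
      have "emp_mean Y i n \<le> 9 * c"
        using G3 i False pulls_lb[OF i] pulls_ub unfolding event_G3_def thr6 thr9 n_def Tt_def[symmetric] by (meson not_less)
      hence False using arm_G3[of mi c "L / real n" M] mi_def ei bigc cpos minn einn Mle by simp
      thus ?thesis ..
    qed
  qed
qed

end
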